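(* In the Markovian PRP setting below, assume that $g^p_t$ is $C^1$ and $g^a_t,c_t$ are $C^2$ for $t\in\mathbb{T}$. Then for $\beta\in\mathbb{R}$, $(A,\gamma)\in\mathbb{R}^N\times\mathbb{R}^D$: $$(A,\gamma)\in\mathbb{C}_t(\beta)\iff \beta\mu-\nabla c_t(A)+\beta\sigma\nabla g^a_t(\gamma)=0.$$ Moreover, let $\{(A_t,\beta_t,\gamma_t)\}_{t\in\mathbb{T}}$ be an optimal contract for the Principal (i.e. for each $t$, $(A_t,\beta_t,\gamma_t)$ maximizes $A\mu-c_t(A)+g^a_t(\gamma)+g^p_t(\sigma'A-\gamma)$ over $\beta\in\mathbb{R}$, $(A,\gamma)\in\mathbb{C}_t(\beta)$), and suppose that for every $t$ the matrix $\big[\,\mu+\sigma\nabla g^a_t(\gamma_t)\ \big|\ \beta_t\sigma\nabla^2g^a_t(\gamma_t)\ \big|\ -\nabla^2c_t(A_t)\,\big]\in\mathbb{R}^{N\times(1+D+N)}$ has full rank $N$. Then there exist $\lambda_t\in\mathbb{R}^N$ such that $$0=\beta_t\mu-\nabla c_t(A_t)+\beta_t\sigma\nabla g^a_t(\gamma_t),$$ $$0=\mu-\nabla c_t(A_t)+\sigma\nabla g^p_t(\sigma'A_t-\gamma_t)-\nabla^2c_t(A_t)\lambda_t,$$ $$0=\nabla g^a_t(\gamma_t)-\nabla g^p_t(\sigma'A_t-\gamma_t)+\beta_t\nabla^2g^a_t(\gamma_t)\sigma'\lambda_t,$$ $$0=\lambda_t\cdot[\mu+\sigma\nabla g^a_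t(\gamma_t)].$$
   Context: Markovian PRP setting: $T\in\mathbb{N}$, $\mathbb{T}=\{0,\dots,T-1\}$. The filtration $(\mathcal{F}_t)$ is generated by a $d$-dimensional process $\bar w$ observed by both parties; prices satisfy $\Delta P_{t+1}=diag(P_t)[\mu+\sigma\Delta\bar w_{t+1}]$ with $\mu\in\mathbb{R}^N$ and $\sigma\in\mathbb{R}^{N\times d}$ with linearly independent rows ($d\ge N$), so $\Delta\tilde P_{t+1}:=diag(P_t)^{-1}\Delta P_{t+1}=\mu+\sigma\Delta\bar w_{t+1}$. Predictable Representation Property: there are $(\mathcal{F}_t)$-adapted processes $w^{d+1},\dots,w^D$ such that $w=(\bar w,w^{d+1},\dots,w^D)$ has mutually uncorrelated, zero-mean increments with nontrivial finite second moments, independent of the past, and $L^0(\mathcal{F}_{t+1})=\{x+Z\Delta w_{t+1}:x\in L^0(\mathcal{F}_t),Z\in L^0(\mathcal{F}_t)^D\}$. $\sigma$ is identified with the $N\times D$ matrix obtained by appending $D-d$ zero columns; $\sigma'$ is its transpose. Preferences $U^a,U^p$ satisfy the usual conditions (normalized, proper, monotone, conditionally concave, translation invariant, time consistent); Markov assumption: the generators $g^l_t(z):=U^l_t(z\Delta w_{t+1})$ map $\mathbb{R}^D\to\mathbb{R}$ (deterministic), $l=a,p$; they are concave with $g^l_t(0)=0$. $c_t:\mathbb{R}^N\to\mathbb{R}$ strictly convex. In these variables a contract at time $t$ is $(A,\beta,\gamma)\in\mathbb{R}^N\times\mathbb{R}\times\mathbb{R}^D$ (Agent's continuation $\Gamma$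 has martingale part $\gamma\Delta w_{t+1}$), and $\mathbb{C}_t(\beta)$ is the set of $(A,\gamma)$ such that for all $\bar A\in\mathbb{R}^N$: $g^a_t(\gamma)-c_t(A)\ge\beta(\bar A-A)\mu+g^a_t(\gamma+\beta\sigma'(\bar A-A))-c_t(\bar A)$. *)

theory Defs
  imports "HOL-Analysis.Analysis"
begin

definition grad :: "(real^'k \<Rightarrow> real) \<Rightarrow> real^'k \<Rightarrow> real^'k" where
  "grad f x = (SOME g. GDERIV f x :> g)"

definition hess :: "(real^'k \<Rightarrow> real) \<Rightarrow> real^'k \<Rightarrow> real^'k^'k" where
  "hess f x = jacobian (grad f) (at x)"

definition C1_fun :: "(real^'k \<Rightarrow> real) \<Rightarrow> bool" where
  "C1_fun f \<longleftrightarrow> (\<forall>x. f differentiable (at x)) \<and> continuous_on UNIV (grad f)"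

definition C2_fun :: "(real^'k \<Rightarrow> real) \<Rightarrow> bool" where
  "C2_fun f \<longleftrightarrow> C1_fun f \<and> (\<forall>x. grad f differentiable (at x)) \<and> continuous_on UNIV (hess f)"

definition strictly_convex :: "(real^'k \<Rightarrow> real) \<Rightarrow> bool" where
  "strictly_convex f \<longleftrightarrow> (\<forall>x y u. x \<noteq> y \<and> 0 < u \<and> u < 1 \<longrightarrow>
      f ((1 - u) *\<^sub>R x + u *\<^sub>R y) < (1 - u) * f x + u * f y)"

text \<open>Incentive-compatible set C_t(beta) for the Agent: sigma is the N x D matrix
  (rows indexed by 'n, columns by 'D), sigma' = transpose sigma.\<close>
definition IC_set :: "(real^'D \<Rightarrow> real) \<Rightarrow> (real^'n \<Rightarrow> real) \<Rightarrow> real^'n \<Rightarrow> real^'D^'n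
    \<Rightarrow> real \<Rightarrow> ((real^'n) \<times> (real^'D)) set" where
  "IC_set ga c \<mu> \<sigma> \<beta> = {(A, \<gamma>). \<forall>Ab.
      ga \<gamma> - c A \<ge> \<beta> * ((Ab - A) \<bullet> \<mu>) + ga (\<gamma> + \<beta> *\<^sub>R (transpose \<sigma> *v (Ab - A))) - c Ab}"

definition principal_obj :: "(real^'D \<Rightarrow> real) \<Rightarrow> (real^'D \<Rightarrow> real) \<Rightarrow> (real^'n \<Rightarrow> real)
    \<Rightarrow> real^'n \<Rightarrow> real^'D^'n \<Rightarrow> real^'n \<Rightarrow> real^'D \<Rightarrow> real" where
  "principal_obj ga gp c \<mu> \<sigma> A \<gamma> = A \<bullet> \<mu> - c A + ga \<gamma> + gp (transpose \<sigma> *v A - \<gamma>)"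

text \<open>The N x (1+D+N) matrix [ mu + sigma grad ga | beta sigma hess ga | - hess c ],
  columns indexed by (unit + 'D) + 'n.\<close>
definition KKT_matrix :: "(real^'D \<Rightarrow> real) \<Rightarrow> (real^'n \<Rightarrow> real) \<Rightarrow> real^'n \<Rightarrow> real^'D^'n
    \<Rightarrow> real^'n \<Rightarrow> real \<Rightarrow> real^'D \<Rightarrow> real^((unit + 'D) + 'n)^'n" where
  "KKT_matrix ga c \<mu> \<sigma> A \<beta> \<gamma> = (\<chi> i j. case j of
       Inl (Inl _) \<Rightarrow> (\<mu> + \<sigma> *v grad ga \<gamma>) $ i
     | Inl (Inr k) \<Rightarrow> (\<beta> *\<^sub>R (\<sigma> ** hess ga \<gamma>)) $ i $ k
     | Inr k \<Rightarrow> (- hess c A) $ i $ k)"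

end

theory Submission
  imports Defs
begin


lemma grad_works:
  fixes f :: "real^'k \<Rightarrow> real"
  assumes "f differentiable (at x)"
  shows "(f has_derivative (\<lambda>h. h \<bullet> grad f x)) (at x)"
proof -
  obtain f' where d: "(f has_derivative f') (at x)" using assms differentiable_def by blast
  have lin: "linear f'" using d has_derivative_linear by blast
  have "\<And>h. f' h = h \<bullet> adjoint f' 1" using adjoint_works[OF lin, of _ 1] by simp
  then have "f' = (\<lambda>h. h \<bullet> adjoint f' 1)" by auto
  with d have "GDERIV f x :> adjoint f' 1" unfolding gderiv_def by simp
  then have "GDERIV f x :> grad f x" unfolding grad_def by (rule someI)
  then show ?thesis unfolding gderiv_def .
qed

lemma hess_works:
  fixes f :: "real^'k \<Rightarrow> real"
  assumes "grad f differentiable (at x)"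
  shows "(grad f has_derivative (\<lambda>h. hess f x *v h)) (at x)"
  using assms jacobian_works unfolding hess_def by blast



lemma second_diff_approx:
  fixes f :: "real^'k \<Rightarrow> real"
  assumes df: "\<And>y. f differentiable (at y)" and dg: "grad f differentiable (at x)"
    and e: "e > 0"
  shows "\<exists>d>0. \<forall>h. 0 < h \<and> h < d \<longrightarrow>
    \<bar>f (x + h *\<^sub>R v + h *\<^sub>R w) - f (x + h *\<^sub>R v) - f (x + h *\<^sub>R w) + f x
       - h^2 * ((hess f x *v v) \<bullet> w)\<bar> \<le> e * h^2"
proof -
  define L where "L = (\<lambda>z. hess f x *v z)"
  define g where "g = grad f"
  define C where "C = (norm v + 2 * norm w) * norm w + 1"
  have Cpos: "C > 0" unfolding C_def by (intro add_nonneg_pos mult_nonneg_nonneg) auto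
  have "(g has_derivative L) (at x)" unfolding L_def g_def using hess_works[OF dg] .
  then have "\<forall>e>0. \<exists>d>0. \<forall>y. norm(y - x) < d \<longrightarrow> norm (g y - g x - L (y - x)) \<le> e * norm (y - x)"
    by (simp add: has_derivative_at_alt)
  moreover have "e / C > 0" using e Cpos by simp
  ultimately obtain d0 where d0: "d0 > 0"
    and est: "\<And>y. norm(y - x) < d0 \<Longrightarrow> norm (g y - g x - L (y - x)) \<le> (e / C) * norm (y - x)"
    by blast
  have P: "norm v + norm w + 1 > 0" using norm_ge_zero[of v] norm_ge_zero[of w] by linarith
  define d where "d = d0 / (norm v + norm w + 1)"
  have dpos: "d > 0" unfolding d_def using d0 P by simp
  show ?thesis
  proof (intro exI[of _ d] conjI allI impI)
    show "d > 0" by fact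
    fix h :: real assume h: "0 < h \<and> h < d"
    have hd0: "h * (norm v + norm w) < d0"
    proof -
      have "h * (norm v + norm w) \<le> h * (norm v + norm w + 1)" using h by simp
      also have "\<dots> < d * (norm v + norm w + 1)"
        using h P by (intro mult_strict_right_mono) auto
      also have "\<dots> = d0" unfolding d_def using P by simp
      finally show ?thesis .
    qed
    define \<phi> where "\<phi> = (\<lambda>t. f (x + h *\<^sub>R v + t *\<^sub>R w) - f (x + t *\<^sub>R w))"
    have der: "(\<phi> has_derivative (\<lambda>s. s * ((g (x + h *\<^sub>R v + t *\<^sub>R w) - g (x + t *\<^sub>R w)) \<bullet> w)))
        (at t within {0..h})" for t
    proof -
      have l1: "((\<lambda>t. x + h *\<^sub>R v + t *\<^sub>R w) has_derivative (\<lambda>s. s *\<^sub>R w)) (at t within {0..h})"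
        by (auto intro!: derivative_eq_intros)
      have l2: "((\<lambda>t. x + t *\<^sub>R w) has_derivative (\<lambda>s. s *\<^sub>R w)) (at t within {0..h})"
        by (auto intro!: derivative_eq_intros)
      have c1: "((\<lambda>t. f (x + h *\<^sub>R v + t *\<^sub>R w)) has_derivative
          (\<lambda>s. (s *\<^sub>R w) \<bullet> g (x + h *\<^sub>R v + t *\<^sub>R w))) (at t within {0..h})"
        using has_derivative_compose[OF l1 grad_works[OF df]] unfolding g_def by simp
      have c2: "((\<lambda>t. f (x + t *\<^sub>R w)) has_derivative
          (\<lambda>s. (s *\<^sub>R w) \<bullet> g (x + t *\<^sub>R w))) (at t within {0..h})"
        using has_derivative_compose[OF l2 grad_works[OF df]] unfolding g_def by simp
      show ?thesis unfolding \<phi>_def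
        by (rule has_derivative_eq_rhs[OF has_derivative_diff[OF c1 c2]])
          (auto simp: inner_diff_left inner_commute algebra_simps)
    qed
    obtain \<xi> where \<xi>: "\<xi> \<in> {0..h}" and mv: "\<phi> h - \<phi> 0 =
        (h - 0) * ((g (x + h *\<^sub>R v + \<xi> *\<^sub>R w) - g (x + \<xi> *\<^sub>R w)) \<bullet> w)"
      using mvt_very_simple[of 0 h \<phi>, OF _ der] h by auto
    define y1 where "y1 = x + h *\<^sub>R v + \<xi> *\<^sub>R w"
    define y2 where "y2 = x + \<xi> *\<^sub>R w"
    have n1: "norm (y1 - x) \<le> h * (norm v + norm w)"
    proof -
      have "norm (y1 - x) = norm (h *\<^sub>R v + \<xi> *\<^sub>R w)" unfolding y1_def by (simp add: algebra_simps)
      also have "\<dots> \<le> h * norm v + \<xi> * norm w" using h \<xi>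
        by (metis (no_types, lifting) abs_of_nonneg atLeastAtMost_iff less_eq_real_def norm_scaleR norm_triangle_ineq)
      also have "\<dots> \<le> h * norm v + h * norm w" using \<xi> by (simp add: mult_right_mono)
      finally show ?thesis by (simp add: algebra_simps)
    qed
    have n2: "norm (y2 - x) \<le> h * norm w"
      unfolding y2_def using \<xi> by (simp add: mult_right_mono)
    have n2': "h * norm w \<le> h * (norm v + norm w)" using h by simp
    have E1: "norm (g y1 - g x - L (y1 - x)) \<le> (e / C) * (h * (norm v + norm w))"
      using est[of y1] n1 hd0 \<open>e / C > 0\<close>
      by (meson le_less_trans mult_left_mono order.trans less_imp_le)
    have E2: "norm (g y2 - g x - L (y2 - x)) \<le> (e / C) * (h * norm w)"
      using est[of y2] n2 n2' hd0 \<open>e / C > 0\<close>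
      by (meson le_less_trans mult_left_mono order.trans less_imp_le)
    have Ldiff: "L (y1 - x) - L (y2 - x) = h *\<^sub>R L v"
      unfolding L_def y1_def y2_def
      by (simp add: matrix_vector_right_distrib matrix_vector_mult_diff_distrib algebra_simps)
    have "g y1 - g y2 - h *\<^sub>R L v = (g y1 - g x - L (y1 - x)) - (g y2 - g x - L (y2 - x))"
      using Ldiff by (simp add: algebra_simps)
    then have "norm (g y1 - g y2 - h *\<^sub>R L v) \<le> norm (g y1 - g x - L (y1 - x)) + norm (g y2 - g x - L (y2 - x))"
      by (metis norm_triangle_ineq4)
    also have "\<dots> \<le> (e / C) * (h * (norm v + norm w)) + (e / C) * (h * norm w)"
      using E1 E2 by linarith
    also have "\<dots> = (e / C) * (h * (norm v + 2 * norm w))" by (simp add: algebra_simps)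
    finally have N: "norm (g y1 - g y2 - h *\<^sub>R L v) \<le> (e / C) * (h * (norm v + 2 * norm w))" .
    have "\<bar>(g y1 - g y2) \<bullet> w - h * (L v \<bullet> w)\<bar> = \<bar>(g y1 - g y2 - h *\<^sub>R L v) \<bullet> w\<bar>"
      by (simp add: inner_diff_left)
    also have "\<dots> \<le> norm (g y1 - g y2 - h *\<^sub>R L v) * norm w" by (rule Cauchy_Schwarz_ineq2)
    also have "\<dots> \<le> (e / C) * (h * (norm v + 2 * norm w)) * norm w"
      using N by (rule mult_right_mono) simp
    also have "\<dots> = (e / C) * h * ((norm v + 2 * norm w) * norm w)" by simp
    also have "\<dots> \<le> (e / C) * h * C"
    proof (rule mult_left_mono)
      show "(norm v + 2 * norm w) * norm w \<le> C" unfolding C_def by simp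
      show "0 \<le> e / C * h" using \<open>e / C > 0\<close> h by (intro mult_nonneg_nonneg) auto
    qed
    also have "\<dots> = e * h" using Cpos by simp
    finally have K: "\<bar>(g y1 - g y2) \<bullet> w - h * (L v \<bullet> w)\<bar> \<le> e * h" .
    have "f (x + h *\<^sub>R v + h *\<^sub>R w) - f (x + h *\<^sub>R v) - f (x + h *\<^sub>R w) + f x
       - h^2 * ((hess f x *v v) \<bullet> w) = h * ((g y1 - g y2) \<bullet> w - h * (L v \<bullet> w))"
      using mv unfolding \<phi>_def y1_def y2_def L_def by (simp add: algebra_simps power2_eq_square)
    then have "\<bar>f (x + h *\<^sub>R v + h *\<^sub>R w) - f (x + h *\<^sub>R v) - f (x + h *\<^sub>R w) + f x
       - h^2 * ((hess f x *v v) \<bullet> w)\<bar> = h * \<bar>(g y1 - g y2) \<bullet> w - h * (L v \<bullet> w)\<bar>"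
      using h by (simp add: abs_mult)
    also have "\<dots> \<le> h * (e * h)" using K h by (simp add: mult_left_mono)
    finally show "\<bar>f (x + h *\<^sub>R v + h *\<^sub>R w) - f (x + h *\<^sub>R v) - f (x + h *\<^sub>R w) + f x
       - h^2 * ((hess f x *v v) \<bullet> w)\<bar> \<le> e * h^2" by (simp add: power2_eq_square algebra_simps)
  qed
qed

lemma hess_sym_inner:
  fixes f :: "real^'k \<Rightarrow> real"
  assumes df: "\<And>y. f differentiable (at y)" and dg: "grad f differentiable (at x)"
  shows "(hess f x *v v) \<bullet> w = (hess f x *v w) \<bullet> v"
proof (rule ccontr)
  define a where "a = (hess f x *v v) \<bullet> w"
  define b where "b = (hess f x *v w) \<bullet> v"
  assume "\<not> ?thesis"
  then have ne: "\<bar>a - b\<bar> > 0" unfolding a_def b_def by simp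
  define e where "e = \<bar>a - b\<bar> / 4"
  have e: "e > 0" unfolding e_def using ne by simp
  obtain d1 where d1: "d1 > 0" and D1: "\<And>h. 0 < h \<and> h < d1 \<Longrightarrow>
    \<bar>f (x + h *\<^sub>R v + h *\<^sub>R w) - f (x + h *\<^sub>R v) - f (x + h *\<^sub>R w) + f x
       - h^2 * a\<bar> \<le> e * h^2"
    using second_diff_approx[OF df dg e, of v w] unfolding a_def by blast
  obtain d2 where d2: "d2 > 0" and D2: "\<And>h. 0 < h \<and> h < d2 \<Longrightarrow>
    \<bar>f (x + h *\<^sub>R w + h *\<^sub>R v) - f (x + h *\<^sub>R w) - f (x + h *\<^sub>R v) + f x
       - h^2 * b\<bar> \<le> e * h^2"
    using second_diff_approx[OF df dg e, of w v] unfolding b_def by blast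
  define h where "h = min d1 d2 / 2"
  have h: "0 < h" "h < d1" "h < d2" unfolding h_def using d1 d2 by auto
  have eq: "x + h *\<^sub>R w + h *\<^sub>R v = x + h *\<^sub>R v + h *\<^sub>R w" by (simp add: algebra_simps)
  have "\<bar>h^2 * a - h^2 * b\<bar> \<le> 2 * e * h^2"
    using D1[of h] D2[of h] h eq by auto
  then have "h^2 * \<bar>a - b\<bar> \<le> h^2 * (2 * e)"
    by (simp add: abs_mult flip: right_diff_distrib) (simp add: algebra_simps)
  then have "\<bar>a - b\<bar> \<le> 2 * e" using h by simp
  then show False using ne unfolding e_def by simp
qed

lemma hess_sym:
  fixes f :: "real^'k \<Rightarrow> real"
  assumes df: "\<And>y. f differentiable (at y)" and dg: "grad f differentiable (at x)"
  shows "transpose (hess f x) = hess f x"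
proof -
  have "hess f x $ i $ j = hess f x $ j $ i" for i j
    using hess_sym_inner[OF df dg, of "axis j 1" "axis i 1"]
    by (simp add: matrix_vector_mult_basis column_def inner_axis)
  then show ?thesis by (simp add: vec_eq_iff transpose_def)
qed



lemma strictly_convex_convex:
  assumes "strictly_convex c"
  shows "convex_on UNIV c"
proof (rule convex_onI)
  fix t :: real and x y assume t: "t > 0" "t < 1"
  show "c ((1 - t) *\<^sub>R x + t *\<^sub>R y) \<le> (1 - t) * c x + t * c y"
  proof (cases "x = y")
    case True then show ?thesis by (simp add: algebra_simps flip: scaleR_add_left)
  next
    case False then show ?thesis using assms t unfolding strictly_convex_def by (simp add: less_imp_le)
  qed
qed simp

lemma transpose_inner: "(transpose (s::real^'a^'b) *v k) \<bullet> u = k \<bullet> (s *v u)"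
  by (simp add: dot_lmul_matrix)

lemma IC_iff:
  fixes ga :: "real^'D \<Rightarrow> real" and c :: "real^'n \<Rightarrow> real"
  assumes ga_conc: "concave_on UNIV ga" and c_sc: "strictly_convex c"
    and dga: "\<And>y. ga differentiable (at y)" and dc: "\<And>y. c differentiable (at y)"
  shows "(A, \<gamma>) \<in> IC_set ga c \<mu> \<sigma> \<beta> \<longleftrightarrow> \<beta> *\<^sub>R \<mu> - grad c A + \<beta> *\<^sub>R (\<sigma> *v grad ga \<gamma>) = 0"
proof -
  define F where "F = (\<lambda>Ab. \<beta> * ((Ab - A) \<bullet> \<mu>) + ga (\<gamma> + \<beta> *\<^sub>R (transpose \<sigma> *v (Ab - A))) - c Ab)"
  define V where "V = \<beta> *\<^sub>R \<mu> - grad c A + \<beta> *\<^sub>R (\<sigma> *v grad ga \<gamma>)"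
  have FA: "F A = ga \<gamma> - c A" unfolding F_def by simp
  have IC: "(A, \<gamma>) \<in> IC_set ga c \<mu> \<sigma> \<beta> \<longleftrightarrow> (\<forall>Ab. F Ab \<le> F A)"
    unfolding IC_set_def FA unfolding F_def by auto
  have derF: "(F has_derivative (\<lambda>k. k \<bullet> V)) (at A)"
  proof -
    have l: "((\<lambda>Ab. \<gamma> + \<beta> *\<^sub>R (transpose \<sigma> *v (Ab - A))) has_derivative
        (\<lambda>k. \<beta> *\<^sub>R (transpose \<sigma> *v k))) (at A)"
    proof -
      have bl: "bounded_linear (\<lambda>k. transpose \<sigma> *v k)"
        using matrix_vector_mul_linear[of "transpose \<sigma>"] linear_conv_bounded_linear by blast
      have "((\<lambda>Ab. transpose \<sigma> *v (Ab - A)) has_derivative (\<lambda>k. transpose \<sigma> *v (k - 0))) (at A)"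
        by (rule bounded_linear.has_derivative[OF bl]) (auto intro!: derivative_eq_intros)
      then have "((\<lambda>Ab. \<gamma> + \<beta> *\<^sub>R (transpose \<sigma> *v (Ab - A))) has_derivative
        (\<lambda>k. 0 + \<beta> *\<^sub>R (transpose \<sigma> *v (k - 0)))) (at A)"
        by (intro has_derivative_add has_derivative_const has_derivative_scaleR_right)
      then show ?thesis by simp
    qed
    have g: "((\<lambda>Ab. ga (\<gamma> + \<beta> *\<^sub>R (transpose \<sigma> *v (Ab - A)))) has_derivative
        (\<lambda>k. (\<beta> *\<^sub>R (transpose \<sigma> *v k)) \<bullet> grad ga \<gamma>)) (at A)"
      using has_derivative_compose[OF l grad_works[OF dga]] by simp
    have lin: "((\<lambda>Ab. \<beta> * ((Ab - A) \<bullet> \<mu>)) has_derivative (\<lambda>k. \<beta> * (k \<bullet> \<mu>))) (at A)"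
      by (auto intro!: derivative_eq_intros)
    show ?thesis unfolding F_def
      by (rule has_derivative_eq_rhs[OF has_derivative_diff[OF has_derivative_add[OF lin g] grad_works[OF dc]]])
        (auto simp: V_def transpose_inner dot_lmul_matrix inner_diff_right inner_add_right algebra_simps)
  qed
  have Fconc: "F ((1 - t) *\<^sub>R x + t *\<^sub>R y) \<ge> (1 - t) * F x + t * F y" if t: "0 \<le> t" "t \<le> 1" for t x y
  proof -
    have e1: "\<beta> * (((1 - t) *\<^sub>R x + t *\<^sub>R y - A) \<bullet> \<mu>) = (1 - t) * (\<beta> * ((x - A) \<bullet> \<mu>)) + t * (\<beta> * ((y - A) \<bullet> \<mu>))"
      by (simp add: algebra_simps inner_diff_left inner_add_left)
    have arg: "\<gamma> + \<beta> *\<^sub>R (transpose \<sigma> *v ((1 - t) *\<^sub>R x + t *\<^sub>R y - A)) =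
       (1 - t) *\<^sub>R (\<gamma> + \<beta> *\<^sub>R (transpose \<sigma> *v (x - A))) + t *\<^sub>R (\<gamma> + \<beta> *\<^sub>R (transpose \<sigma> *v (y - A)))"
      by (simp add: matrix_vector_mult_diff_distrib matrix_vector_right_distrib algebra_simps
          flip: scaleR_add_left)
    have e2: "ga (\<gamma> + \<beta> *\<^sub>R (transpose \<sigma> *v ((1 - t) *\<^sub>R x + t *\<^sub>R y - A))) \<ge>
       (1 - t) * ga (\<gamma> + \<beta> *\<^sub>R (transpose \<sigma> *v (x - A))) + t * ga (\<gamma> + \<beta> *\<^sub>R (transpose \<sigma> *v (y - A)))"
      unfolding arg using concave_onD[OF ga_conc t] by simp
    have e3: "c ((1 - t) *\<^sub>R x + t *\<^sub>R y) \<le> (1 - t) * c x + t * c y"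
      using convex_onD[OF strictly_convex_convex[OF c_sc] t] by simp
    show ?thesis unfolding F_def using e1 e2 e3 by (simp add: algebra_simps)
  qed
  show ?thesis
  proof
    assume "(A, \<gamma>) \<in> IC_set ga c \<mu> \<sigma> \<beta>"
    then have "\<forall>y\<in>UNIV. F y \<le> F A" using IC by auto
    then have "(\<lambda>k. k \<bullet> V) = (\<lambda>v. 0)"
      using differential_zero_maxmin[of A UNIV F, OF _ _ derF] by auto
    then have "V \<bullet> V = 0" by metis
    then show "\<beta> *\<^sub>R \<mu> - grad c A + \<beta> *\<^sub>R (\<sigma> *v grad ga \<gamma>) = 0" unfolding V_def by simp
  next
    assume "\<beta> *\<^sub>R \<mu> - grad c A + \<beta> *\<^sub>R (\<sigma> *v grad ga \<gamma>) = 0"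
    then have V0: "V = 0" unfolding V_def .
    have "F Ab \<le> F A" for Ab
    proof -
      define \<phi> where "\<phi> = (\<lambda>u::real. - F (A + u *\<^sub>R (Ab - A)))"
      have cv: "convex_on UNIV \<phi>"
      proof (rule convex_onI)
        fix t u1 u2 :: real assume t: "t > 0" "t < 1"
        have "A + ((1 - t) *\<^sub>R u1 + t *\<^sub>R u2) *\<^sub>R (Ab - A) =
          (1 - t) *\<^sub>R (A + u1 *\<^sub>R (Ab - A)) + t *\<^sub>R (A + u2 *\<^sub>R (Ab - A))"
          by (simp add: vec_eq_iff algebra_simps)
        then show "\<phi> ((1 - t) *\<^sub>R u1 + t *\<^sub>R u2) \<le> (1 - t) * \<phi> u1 + t * \<phi> u2"
          unfolding \<phi>_def using Fconc[of t "A + u1 *\<^sub>R (Ab - A)" "A + u2 *\<^sub>R (Ab - A)"] t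
          by simp
      qed simp
      have l: "((\<lambda>u::real. A + u *\<^sub>R (Ab - A)) has_derivative (\<lambda>s. s *\<^sub>R (Ab - A))) (at 0)"
        by (auto intro!: derivative_eq_intros)
      have "((\<lambda>u. F (A + u *\<^sub>R (Ab - A))) has_derivative (\<lambda>s. (s *\<^sub>R (Ab - A)) \<bullet> V)) (at 0)"
      proof -
        have "(F has_derivative (\<lambda>k. k \<bullet> V)) (at (A + (0::real) *\<^sub>R (Ab - A)))" using derF by simp
        from has_derivative_compose[OF l this] show ?thesis by simp
      qed
      then have "(\<phi> has_derivative (\<lambda>s. 0)) (at 0)"
        unfolding \<phi>_def V0 using has_derivative_minus by fastforce
      then have "(\<phi> has_field_derivative 0) (at 0 within UNIV)"
        by (simp add: has_field_derivative_def) (metis (no_types) lambda_zero)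
      from convex_on_imp_above_tangent[OF cv _ _ _ this, of 1]
      have "\<phi> 1 - \<phi> 0 \<ge> 0" by simp
      then show ?thesis unfolding \<phi>_def by simp
    qed
    then show "(A, \<gamma>) \<in> IC_set ga c \<mu> \<sigma> \<beta>" using IC by auto
  qed
qed



lemma vm_comp: "((x::real^'m) v* (M::real^'k^'m)) $ k = x \<bullet> (M *v axis k 1)"
  by (simp add: vector_matrix_mult_def matrix_vector_mult_def inner_vec_def axis_def
      if_distrib cong: if_cong)

lemma KKT_single:
  fixes ga gp :: "real^'D \<Rightarrow> real" and c :: "real^'n \<Rightarrow> real"
    and \<mu> :: "real^'n" and \<sigma> :: "real^'D^'n"
  assumes ga_conc: "concave_on UNIV ga" and c_sc: "strictly_convex c"
    and gp_C1: "C1_fun gp" and ga_C2: "C2_fun ga" and c_C2: "C2_fun c"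
    and IC0: "(A0, \<gamma>0) \<in> IC_set ga c \<mu> \<sigma> \<beta>0"
    and opt: "\<forall>\<beta> A \<gamma>. (A, \<gamma>) \<in> IC_set ga c \<mu> \<sigma> \<beta> \<longrightarrow>
               principal_obj ga gp c \<mu> \<sigma> A \<gamma> \<le> principal_obj ga gp c \<mu> \<sigma> A0 \<gamma>0"
    and rk: "rank (KKT_matrix ga c \<mu> \<sigma> A0 \<beta>0 \<gamma>0) = CARD('n)"
  shows "\<exists>l :: real^'n.
             0 = \<beta>0 *\<^sub>R \<mu> - grad c A0 + \<beta>0 *\<^sub>R (\<sigma> *v grad ga \<gamma>0)
           \<and> 0 = \<mu> - grad c A0 + \<sigma> *v grad gp (transpose \<sigma> *v A0 - \<gamma>0)
                 - hess c A0 *v l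
           \<and> 0 = grad ga \<gamma>0 - grad gp (transpose \<sigma> *v A0 - \<gamma>0)
                 + \<beta>0 *\<^sub>R (hess ga \<gamma>0 *v (transpose \<sigma> *v l))
           \<and> 0 = l \<bullet> (\<mu> + \<sigma> *v grad ga \<gamma>0)"
proof -
  have dga: "\<And>y. ga differentiable (at y)" and cga: "continuous_on UNIV (grad ga)"
    and dgga: "\<And>y. grad ga differentiable (at y)"
    using ga_C2 unfolding C2_fun_def C1_fun_def by auto
  have dc: "\<And>y. c differentiable (at y)" and cgc: "continuous_on UNIV (grad c)"
    and dgc: "\<And>y. grad c differentiable (at y)"
    using c_C2 unfolding C2_fun_def C1_fun_def by auto
  have dgp: "\<And>y. gp differentiable (at y)"
    using gp_C1 unfolding C1_fun_def by auto
  have IC: "\<And>A \<gamma> \<beta>. (A, \<gamma>) \<in> IC_set ga c \<mu> \<sigma> \<beta> \<longleftrightarrow> \<beta> *\<^sub>R \<mu> - grad c A + \<beta> *\<^sub>R (\<sigma> *v grad ga \<gamma>) = 0"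
    using IC_iff[OF ga_conc c_sc dga dc] by blast
  have E1: "\<beta>0 *\<^sub>R \<mu> - grad c A0 + \<beta>0 *\<^sub>R (\<sigma> *v grad ga \<gamma>0) = 0" using IC0 IC by blast
  define Hc where "Hc = hess c A0"
  define Hg where "Hg = hess ga \<gamma>0"
  define p0 where "p0 = transpose \<sigma> *v A0 - \<gamma>0"
  define W where "W = \<mu> - grad c A0 + \<sigma> *v grad gp p0"
  define obj where "obj = (\<lambda>x::real \<times> (real^'D) \<times> (real^'n). principal_obj ga gp c \<mu> \<sigma> (snd (snd x)) (fst (snd x)))"
  define hh where "hh = (\<lambda>x::real \<times> (real^'D) \<times> (real^'n).
      fst x *\<^sub>R \<mu> - grad c (snd (snd x)) + fst x *\<^sub>R (\<sigma> *v grad ga (fst (snd x))))"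
  define \<Phi> where "\<Phi> = (\<lambda>x. (obj x, hh x))"
  define x0 where "x0 = (\<beta>0, \<gamma>0, A0)"
  define \<Phi>' where "\<Phi>' = (\<lambda>y::real \<times> (real^'D) \<times> (real^'n).
     (snd (snd y) \<bullet> W + fst (snd y) \<bullet> (grad ga \<gamma>0 - grad gp p0),
      fst y *\<^sub>R (\<mu> + \<sigma> *v grad ga \<gamma>0) + \<beta>0 *\<^sub>R (\<sigma> *v (Hg *v fst (snd y))) - Hc *v snd (snd y)))"
  have bls: "bounded_linear (\<lambda>k. \<sigma> *v k)"
    using matrix_vector_mul_linear[of "\<sigma>"] linear_conv_bounded_linear by blast
  have blt: "bounded_linear (\<lambda>k. transpose \<sigma> *v k)"
    using matrix_vector_mul_linear[of "transpose \<sigma>"] linear_conv_bounded_linear by blast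
  have s2: "((\<lambda>x::real \<times> (real^'D) \<times> (real^'n). snd (snd x)) has_derivative (\<lambda>y. snd (snd y))) (at x0)"
    by (auto intro!: derivative_eq_intros)
  have f2: "((\<lambda>x::real \<times> (real^'D) \<times> (real^'n). fst (snd x)) has_derivative (\<lambda>y. fst (snd y))) (at x0)"
    by (auto intro!: derivative_eq_intros)
  have f1: "((\<lambda>x::real \<times> (real^'D) \<times> (real^'n). fst x) has_derivative (\<lambda>y. fst y)) (at x0)"
    by (auto intro!: derivative_eq_intros)
  have d_lin: "((\<lambda>x::real \<times> (real^'D) \<times> (real^'n). snd (snd x) \<bullet> \<mu>) has_derivative (\<lambda>y. snd (snd y) \<bullet> \<mu>)) (at x0)"
    by (auto intro!: derivative_eq_intros)
  have d_c: "((\<lambda>x. c (snd (snd x))) has_derivative (\<lambda>y. snd (snd y) \<bullet> grad c A0)) (at x0)"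
    using has_derivative_compose[OF s2 grad_works[OF dc]] by (simp add: x0_def)
  have d_ga: "((\<lambda>x. ga (fst (snd x))) has_derivative (\<lambda>y. fst (snd y) \<bullet> grad ga \<gamma>0)) (at x0)"
    using has_derivative_compose[OF f2 grad_works[OF dga]] by (simp add: x0_def)
  have d_q: "((\<lambda>x. transpose \<sigma> *v snd (snd x) - fst (snd x)) has_derivative
      (\<lambda>y. transpose \<sigma> *v snd (snd y) - fst (snd y))) (at x0)"
    by (rule has_derivative_diff[OF bounded_linear.has_derivative[OF blt s2] f2])
  have q0: "transpose \<sigma> *v snd (snd x0) - fst (snd x0) = p0" by (simp add: x0_def p0_def)
  have d_gp: "((\<lambda>x. gp (transpose \<sigma> *v snd (snd x) - fst (snd x))) has_derivative
      (\<lambda>y. (transpose \<sigma> *v snd (snd y) - fst (snd y)) \<bullet> grad gp p0)) (at x0)"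
    using has_derivative_compose[OF d_q grad_works[OF dgp]] q0 by simp
  have derobj: "(obj has_derivative (\<lambda>y. fst (\<Phi>' y))) (at x0)"
    unfolding obj_def principal_obj_def
    by (rule has_derivative_eq_rhs[OF has_derivative_add[OF has_derivative_add[OF
          has_derivative_diff[OF d_lin d_c] d_ga] d_gp]])
      (auto simp: \<Phi>'_def W_def dot_lmul_matrix inner_diff_left inner_diff_right inner_add_right algebra_simps)
  have d1: "((\<lambda>x::real \<times> (real^'D) \<times> (real^'n). fst x *\<^sub>R \<mu>) has_derivative (\<lambda>y. fst y *\<^sub>R \<mu>)) (at x0)"
    by (auto intro!: derivative_eq_intros)
  have d2: "((\<lambda>x. grad c (snd (snd x))) has_derivative (\<lambda>y. Hc *v snd (snd y))) (at x0)"
    using has_derivative_compose[OF s2 hess_works[OF dgc]] by (simp add: x0_def Hc_def)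
  have d3: "((\<lambda>x. grad ga (fst (snd x))) has_derivative (\<lambda>y. Hg *v fst (snd y))) (at x0)"
    using has_derivative_compose[OF f2 hess_works[OF dgga]] by (simp add: x0_def Hg_def)
  have d3': "((\<lambda>x. \<sigma> *v grad ga (fst (snd x))) has_derivative (\<lambda>y. \<sigma> *v (Hg *v fst (snd y)))) (at x0)"
    by (rule bounded_linear.has_derivative[OF bls d3])
  have d4: "((\<lambda>x. fst x *\<^sub>R (\<sigma> *v grad ga (fst (snd x)))) has_derivative
     (\<lambda>y. \<beta>0 *\<^sub>R (\<sigma> *v (Hg *v fst (snd y))) + fst y *\<^sub>R (\<sigma> *v grad ga \<gamma>0))) (at x0)"
    using has_derivative_scaleR[OF f1 d3'] by (simp add: x0_def)
  have derhh: "(hh has_derivative (\<lambda>y. snd (\<Phi>' y))) (at x0)"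
    unfolding hh_def
    by (rule has_derivative_eq_rhs[OF has_derivative_add[OF has_derivative_diff[OF d1 d2] d4]])
      (auto simp: \<Phi>'_def algebra_simps)
  have derPhi: "(\<Phi> has_derivative \<Phi>') (at x0)"
    unfolding \<Phi>_def using has_derivative_Pair[OF derobj derhh] by simp
  have lin: "linear \<Phi>'" using derPhi has_derivative_linear by blast
  have hh0: "hh x0 = 0" using E1 by (simp add: hh_def x0_def)
  have obj0: "obj x0 = principal_obj ga gp c \<mu> \<sigma> A0 \<gamma>0" by (simp add: obj_def x0_def)
  show ?thesis
  proof (cases "surj \<Phi>'")
    case True
    obtain g' where g': "linear g'" "\<Phi>' \<circ> g' = id"
      using real_vector.linear_surjective_right_inverse[OF lin True] by blast
    have cc: "\<And>y. isCont c y" "\<And>y. isCont ga y" "\<And>y. isCont gp y"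
      using dc dga dgp differentiable_imp_continuous_within by blast+
    have cg: "\<And>y. isCont (grad c) y" "\<And>y. isCont (grad ga) y"
      using cgc cga continuous_on_eq_continuous_at open_UNIV by blast+
    have "isCont \<Phi> x" for x
    proof -
      have i1: "isCont (\<lambda>x::real \<times> (real^'D) \<times> (real^'n). c (snd (snd x))) x"
        by (rule isCont_o2[OF _ cc(1)]) (intro continuous_intros)
      have i2: "isCont (\<lambda>x::real \<times> (real^'D) \<times> (real^'n). ga (fst (snd x))) x"
        by (rule isCont_o2[OF _ cc(2)]) (intro continuous_intros)
      have i3: "isCont (\<lambda>x::real \<times> (real^'D) \<times> (real^'n). transpose \<sigma> *v snd (snd x) - fst (snd x)) x"
        by (intro continuous_intros bounded_linear.continuous[OF blt])
      have i4: "isCont (\<lambda>x::real \<times> (real^'D) \<times> (real^'n). gp (transpose \<sigma> *v snd (snd x) - fst (snd x))) x"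
        by (rule isCont_o2[OF i3 cc(3)])
      have i5: "isCont (\<lambda>x::real \<times> (real^'D) \<times> (real^'n). grad c (snd (snd x))) x"
        by (rule isCont_o2[OF _ cg(1)]) (intro continuous_intros)
      have i6: "isCont (\<lambda>x::real \<times> (real^'D) \<times> (real^'n). grad ga (fst (snd x))) x"
        by (rule isCont_o2[OF _ cg(2)]) (intro continuous_intros)
      have i7: "isCont (\<lambda>x::real \<times> (real^'D) \<times> (real^'n). \<sigma> *v grad ga (fst (snd x))) x"
        by (rule bounded_linear.continuous[OF bls i6])
      show ?thesis
        unfolding \<Phi>_def obj_def hh_def principal_obj_def
        by (intro continuous_intros i1 i2 i4 i5 i7)
    qed
    then have cont: "continuous_on UNIV \<Phi>" by (simp add: continuous_at_imp_continuous_on)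
    have "\<Phi> x0 \<in> interior (\<Phi> ` UNIV)"
      by (rule sussmann_open_mapping[OF open_UNIV cont _ derPhi _ g'(2) subset_refl])
        (use g'(1) linear_conv_bounded_linear in auto)
    then obtain e where e: "e > 0" "ball (\<Phi> x0) e \<subseteq> \<Phi> ` UNIV"
      using mem_interior by blast
    have "(obj x0 + e / 2, 0) \<in> ball (\<Phi> x0) e"
      using e hh0 by (simp add: \<Phi>_def dist_Pair_Pair dist_real_def)
    then obtain x where x: "\<Phi> x = (obj x0 + e / 2, 0)" using e by (metis imageE subsetD)
    then have "hh x = 0" by (simp add: \<Phi>_def)
    then have "(snd (snd x), fst (snd x)) \<in> IC_set ga c \<mu> \<sigma> (fst x)"
      using IC by (simp add: hh_def)
    then have "obj x \<le> obj x0" using opt obj0 by (simp add: obj_def)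
    moreover have "obj x = obj x0 + e / 2" using x by (simp add: \<Phi>_def)
    ultimately show ?thesis using e by simp
  next
    case False
    have sub: "subspace (range \<Phi>')" using real_vector.linear_subspace_image[OF lin subspace_UNIV] .
    have "dim (range \<Phi>') < DIM(real \<times> (real^'n))"
    proof (rule ccontr)
      assume "\<not> ?thesis"
      then have "dim (range \<Phi>') = DIM(real \<times> (real^'n))" using dim_subset_UNIV[of "range \<Phi>'"] by linarith
      then have "span (range \<Phi>') = UNIV" using dim_eq_full by blast
      then show False using False sub span_eq_iff by metis
    qed
    then obtain v where v: "v \<noteq> 0" "\<And>y. y \<in> span (range \<Phi>') \<Longrightarrow> orthogonal v y"
      using orthogonal_to_subspace_exists by blast
    have vz: "v \<bullet> \<Phi>' z = 0" for z using v(2)[of "\<Phi>' z"] span_base[of "\<Phi>' z" "range \<Phi>'"]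
      by (auto simp: orthogonal_def)
    obtain a0 lam where vv: "v = (a0, lam)" by (cases v)
    have B1: "lam \<bullet> (\<mu> + \<sigma> *v grad ga \<gamma>0) = 0"
      using vz[of "(1, 0, 0)"] by (simp add: vv \<Phi>'_def)
    have B2: "a0 * (g \<bullet> (grad ga \<gamma>0 - grad gp p0)) + lam \<bullet> (\<beta>0 *\<^sub>R (\<sigma> *v (Hg *v g))) = 0" for g
      using vz[of "(0, g, 0)"] by (simp add: vv \<Phi>'_def)
    have B3: "a0 * (a \<bullet> W) - lam \<bullet> (Hc *v a) = 0" for a
      using vz[of "(0, 0, a)"] by (simp add: vv \<Phi>'_def inner_diff_right)
    show ?thesis
    proof (cases "a0 = 0")
      case True
      then have lam0: "lam \<noteq> 0" using v vv by (auto simp: zero_prod_def)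
      define K where "K = KKT_matrix ga c \<mu> \<sigma> A0 \<beta>0 \<gamma>0"
      have "transpose K *v lam = 0"
      proof -
        have "(lam v* K) $ j = 0" for j
        proof (cases j)
          case (Inl j1)
          show ?thesis
          proof (cases j1)
            case (Inl u)
            have "(lam v* K) $ j = lam \<bullet> (\<mu> + \<sigma> *v grad ga \<gamma>0)"
              by (simp add: K_def KKT_matrix_def vector_matrix_mult_def inner_vec_def \<open>j = _\<close> Inl mult.commute)
            then show ?thesis using B1 by simp
          next
            case (Inr k)
            have "(lam v* K) $ j = (lam v* (\<beta>0 *\<^sub>R (\<sigma> ** Hg))) $ k"
              by (simp add: K_def KKT_matrix_def vector_matrix_mult_def \<open>j = _\<close> Inr Hg_def)
            also have "\<dots> = lam \<bullet> (\<beta>0 *\<^sub>R (\<sigma> *v (Hg *v axis k 1)))"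
              by (simp add: vm_comp matrix_vector_mul_assoc scaleR_matrix_vector_assoc)
            finally show ?thesis using B2[of "axis k 1"] True by simp
          qed
        next
          case (Inr k)
          have "(lam v* K) $ j = (lam v* (- Hc)) $ k"
            by (simp add: K_def KKT_matrix_def vector_matrix_mult_def \<open>j = _\<close> Hc_def)
          also have "\<dots> = - (lam \<bullet> (Hc *v axis k 1))"
          proof -
            have "(- Hc) *v axis k 1 = - (Hc *v axis k 1)"
              by (simp add: vec_eq_iff matrix_vector_mult_def sum_negf)
            then show ?thesis by (simp add: vm_comp)
          qed
          finally show ?thesis using B3[of "axis k 1"] True by simp
        qed
        then show ?thesis by (simp add: vec_eq_iff)
      qed
      moreover have "inj ((*v) (transpose K))"
        using rk rank_transpose[of K] full_rank_injective[of "transpose K"] by (simp add: K_def)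
      ultimately have "lam = 0" by (metis injD matrix_vector_mult_0_right)
      with lam0 show ?thesis by simp
    next
      case False
      define l where "l = inverse a0 *\<^sub>R lam"
      have lam_eq: "lam = a0 *\<^sub>R l" using False by (simp add: l_def)
      have hsg: "\<And>u w. (Hg *v u) \<bullet> w = (Hg *v w) \<bullet> u"
        unfolding Hg_def by (rule hess_sym_inner[OF dga dgga])
      have hsc: "\<And>u w. (Hc *v u) \<bullet> w = (Hc *v w) \<bullet> u"
        unfolding Hc_def by (rule hess_sym_inner[OF dc dgc])
      define V3 where "V3 = grad ga \<gamma>0 - grad gp p0 + \<beta>0 *\<^sub>R (Hg *v (transpose \<sigma> *v l))"
      have "g \<bullet> V3 = 0" for g
      proof -
        have "lam \<bullet> (\<beta>0 *\<^sub>R (\<sigma> *v (Hg *v g))) = a0 * (\<beta>0 * (g \<bullet> (Hg *v (transpose \<sigma> *v l))))"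
        proof -
          have "l \<bullet> (\<sigma> *v (Hg *v g)) = (transpose \<sigma> *v l) \<bullet> (Hg *v g)" by (simp add: dot_lmul_matrix)
          also have "\<dots> = (Hg *v (transpose \<sigma> *v l)) \<bullet> g" by (metis hsg inner_commute)
          finally show ?thesis by (simp add: lam_eq inner_commute)
        qed
        moreover have "a0 * (g \<bullet> V3) = a0 * (g \<bullet> (grad ga \<gamma>0 - grad gp p0))
            + a0 * (\<beta>0 * (g \<bullet> (Hg *v (transpose \<sigma> *v l))))"
          unfolding V3_def by (simp add: inner_add_right algebra_simps)
        ultimately have "a0 * (g \<bullet> V3) = a0 * (g \<bullet> (grad ga \<gamma>0 - grad gp p0))
            + lam \<bullet> (\<beta>0 *\<^sub>R (\<sigma> *v (Hg *v g)))" by (simp, metis)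
        then have "a0 * (g \<bullet> V3) = 0" using B2[of g] by linarith
        then show ?thesis using False by simp
      qed
      then have V3: "V3 = 0" by (metis inner_eq_zero_iff)
      define V2 where "V2 = W - Hc *v l"
      have "a \<bullet> V2 = 0" for a
      proof -
        have "lam \<bullet> (Hc *v a) = a0 * (a \<bullet> (Hc *v l))"
          using hsc[of a l] by (simp add: lam_eq inner_commute)
        moreover have "a0 * (a \<bullet> V2) = a0 * (a \<bullet> W) - a0 * (a \<bullet> (Hc *v l))"
          unfolding V2_def by (simp add: inner_diff_right algebra_simps)
        ultimately have "a0 * (a \<bullet> V2) = a0 * (a \<bullet> W) - lam \<bullet> (Hc *v a)" by simp
        then have "a0 * (a \<bullet> V2) = 0" using B3[of a] by linarith
        then show ?thesis using False by simp
      qed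
      then have V2: "V2 = 0" by (metis inner_eq_zero_iff)
      have B1': "l \<bullet> (\<mu> + \<sigma> *v grad ga \<gamma>0) = 0" using B1 False by (simp add: lam_eq)
      show ?thesis
        by (rule exI[of _ l]) (use E1 V2 V3 B1' in \<open>simp add: V2_def V3_def W_def p0_def Hc_def Hg_def\<close>)
    qed
  qed
qed


theorem mainTheorem9:
  fixes T :: nat
    and \<mu> :: "real^'n"
    and \<sigma> :: "real^'D^'n"
    and ga gp :: "nat \<Rightarrow> real^'D \<Rightarrow> real"
    and c :: "nat \<Rightarrow> real^'n \<Rightarrow> real"
    and At :: "nat \<Rightarrow> real^'n" and \<beta>t :: "nat \<Rightarrow> real" and \<gamma>t :: "nat \<Rightarrow> real^'D"
  assumes sigma_rows: "rank \<sigma> = CARD('n)"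
    and ga_concave: "\<And>t. t < T \<Longrightarrow> concave_on UNIV (ga t)"
    and gp_concave: "\<And>t. t < T \<Longrightarrow> concave_on UNIV (gp t)"
    and ga_zero: "\<And>t. t < T \<Longrightarrow> ga t 0 = 0"
    and gp_zero: "\<And>t. t < T \<Longrightarrow> gp t 0 = 0"
    and c_strict: "\<And>t. t < T \<Longrightarrow> strictly_convex (c t)"
    and gp_C1: "\<And>t. t < T \<Longrightarrow> C1_fun (gp t)"
    and ga_C2: "\<And>t. t < T \<Longrightarrow> C2_fun (ga t)"
    and c_C2: "\<And>t. t < T \<Longrightarrow> C2_fun (c t)"
  shows "(\<forall>t<T. \<forall>\<beta> A \<gamma>. (A, \<gamma>) \<in> IC_set (ga t) (c t) \<mu> \<sigma> \<beta> \<longleftrightarrow>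
            \<beta> *\<^sub>R \<mu> - grad (c t) A + \<beta> *\<^sub>R (\<sigma> *v grad (ga t) \<gamma>) = 0)
    \<and> ((\<forall>t<T. (At t, \<gamma>t t) \<in> IC_set (ga t) (c t) \<mu> \<sigma> (\<beta>t t)
          \<and> (\<forall>\<beta> A \<gamma>. (A, \<gamma>) \<in> IC_set (ga t) (c t) \<mu> \<sigma> \<beta> \<longrightarrow>
               principal_obj (ga t) (gp t) (c t) \<mu> \<sigma> A \<gamma>
                 \<le> principal_obj (ga t) (gp t) (c t) \<mu> \<sigma> (At t) (\<gamma>t t)))
       \<longrightarrow> (\<forall>t<T. rank (KKT_matrix (ga t) (c t) \<mu> \<sigma> (At t) (\<beta>t t) (\<gamma>t t)) = CARD('n))
       \<longrightarrow> (\<forall>t<T. \<exists>l :: real^'n.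
             0 = \<beta>t t *\<^sub>R \<mu> - grad (c t) (At t) + \<beta>t t *\<^sub>R (\<sigma> *v grad (ga t) (\<gamma>t t))
           \<and> 0 = \<mu> - grad (c t) (At t) + \<sigma> *v grad (gp t) (transpose \<sigma> *v At t - \<gamma>t t)
                 - hess (c t) (At t) *v l
           \<and> 0 = grad (ga t) (\<gamma>t t) - grad (gp t) (transpose \<sigma> *v At t - \<gamma>t t)
                 + \<beta>t t *\<^sub>R (hess (ga t) (\<gamma>t t) *v (transpose \<sigma> *v l))
           \<and> 0 = l \<bullet> (\<mu> + \<sigma> *v grad (ga t) (\<gamma>t t))))"
  proof (intro conjI impI allI)
  fix t \<beta> A \<gamma> assume t: "t < T"
  have ga_C2': "C2_fun (ga t)" and c_C2': "C2_fun (c t)" using ga_C2 c_C2 t by auto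
  show "(A, \<gamma>) \<in> IC_set (ga t) (c t) \<mu> \<sigma> \<beta> \<longleftrightarrow>
            \<beta> *\<^sub>R \<mu> - grad (c t) A + \<beta> *\<^sub>R (\<sigma> *v grad (ga t) \<gamma>) = 0"
    by (rule IC_iff[OF ga_concave[OF t] c_strict[OF t]])
      (use ga_C2' c_C2' in \<open>auto simp: C2_fun_def C1_fun_def\<close>)
next
  fix t
  assume opt: "\<forall>t<T. (At t, \<gamma>t t) \<in> IC_set (ga t) (c t) \<mu> \<sigma> (\<beta>t t)
          \<and> (\<forall>\<beta> A \<gamma>. (A, \<gamma>) \<in> IC_set (ga t) (c t) \<mu> \<sigma> \<beta> \<longrightarrow>
               principal_obj (ga t) (gp t) (c t) \<mu> \<sigma> A \<gamma>
                 \<le> principal_obj (ga t) (gp t) (c t) \<mu> \<sigma> (At t) (\<gamma>t t))"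
    and rk: "\<forall>t<T. rank (KKT_matrix (ga t) (c t) \<mu> \<sigma> (At t) (\<beta>t t) (\<gamma>t t)) = CARD('n)"
    and t: "t < T"
  show "\<exists>l :: real^'n.
             0 = \<beta>t t *\<^sub>R \<mu> - grad (c t) (At t) + \<beta>t t *\<^sub>R (\<sigma> *v grad (ga t) (\<gamma>t t))
           \<and> 0 = \<mu> - grad (c t) (At t) + \<sigma> *v grad (gp t) (transpose \<sigma> *v At t - \<gamma>t t)
                 - hess (c t) (At t) *v l
           \<and> 0 = grad (ga t) (\<gamma>t t) - grad (gp t) (transpose \<sigma> *v At t - \<gamma>t t)
                 + \<beta>t t *\<^sub>R (hess (ga t) (\<gamma>t t) *v (transpose \<sigma> *v l))
           \<and> 0 = l \<bullet> (\<mu> + \<sigma> *v grad (ga t) (\<gamma>t t))"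
    using KKT_single[OF ga_concave[OF t] c_strict[OF t] gp_C1[OF t] ga_C2[OF t] c_C2[OF t]]
      opt rk t by blast
qed

end
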